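(* Let $d,s,k\in\mathbb{N}$ with $k\ge 2$, $d>2k$ and $1\le s\le \frac{d}{2k}$. Then there is at most one pair $(\phi,\mathbf{c})$, where $\phi=\alpha\phi_1+\beta\phi_2$ with real $\alpha,\beta>0$ and $\mathbf{c}\in\mathbb{R}^d$, such that the quadric $\{\mathbf{x}\in\mathbb{R}^d:\ \phi[\mathbf{x}-\mathbf{c}]=1\}$ passes through all vertices of $P^{d}_{s,2k}$.
   Context: $\mathbf{j}=(1,\dots,1)\in\mathbb{R}^d$, $\chi_S$ the indicator vector of $S\subseteq\{1,\dots,d\}$. $\phi_1[\mathbf{x}]=(\sum_i x_i)^2$, $\phi_2[\mathbf{x}]=\bigl|\mathbf{x}-\frac{\sum_i x_i}{d}\mathbf{j}\bigr|^2$. For $t\in\{s,s+1\}$, $\mathbf{V}^{d}_{t,2k}=\{\chi_S-\frac{t-1}{d-2k}\mathbf{j}:\ |S|=t\}$, and $P^{d}_{s,2k}=\operatorname{conv}(\mathbf{V}^{d}_{s,2k}\cup-\mathbf{V}^{d}_{s,2k}\cup\mathbf{V}^{d}_{s+1,2k}\cup-\mathbf{V}^{d}_{s+1,2k})$, whose vertex set is $\pm\mathbf{V}^{d}_{s,2k}\cup\pm\mathbf{V}^{d}_{s+1,2k}$. *)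

theory Defs
  imports "HOL-Analysis.Analysis"
begin

text \<open>Vectors in R^d are modelled as real ^ 'n with d = CARD('n).\<close>

definition jvec :: "real ^ 'n" where
  "jvec = (\<chi> i. 1)"

definition chi_set :: "'n set \<Rightarrow> real ^ 'n" where
  "chi_set S = (\<chi> i. if i \<in> S then 1 else 0)"

definition phi1 :: "real ^ 'n \<Rightarrow> real" where
  "phi1 x = (\<Sum>i\<in>UNIV. x $ i)^2"

definition phi2 :: "real ^ 'n \<Rightarrow> real" where
  "phi2 x = (norm (x - ((\<Sum>i\<in>UNIV. x $ i) / real CARD('n)) *\<^sub>R jvec))^2"

definition Vset :: "nat \<Rightarrow> nat \<Rightarrow> (real ^ 'n) set" where
  "Vset t k = {chi_set S - ((real t - 1) / (real CARD('n) - 2 * real k)) *\<^sub>R jvec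
               | S. card S = t}"

definition Ppoly :: "nat \<Rightarrow> nat \<Rightarrow> (real ^ 'n) set" where
  "Ppoly s k = convex hull (Vset s k \<union> uminus ` Vset s k \<union> Vset (s+1) k \<union> uminus ` Vset (s+1) k)"

definition Pvertices :: "nat \<Rightarrow> nat \<Rightarrow> (real ^ 'n) set" where
  "Pvertices s k = Vset s k \<union> uminus ` Vset s k \<union> Vset (s+1) k \<union> uminus ` Vset (s+1) k"

end

theory Submission imports Defs begin

lemma sum_chi_set: "(\<Sum>i\<in>UNIV. chi_set S $ i) = real (card (S::'n::finite set))"
  unfolding chi_set_def by (simp add: sum.If_cases)

lemma sum_chi_mult: "(\<Sum>i\<in>UNIV. chi_set S $ i * f i) = (\<Sum>i\<in>(S::'n::finite set). f i)"
proof -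
  have "\<And>i. chi_set S $ i * f i = (if i \<in> S then f i else 0)" unfolding chi_set_def by simp
  then show ?thesis by (simp add: sum.If_cases)
qed

lemma phi2_alt: "phi2 (x::real^'n) = (\<Sum>i\<in>UNIV. (x$i)^2) - (\<Sum>i\<in>UNIV. x$i)^2 / real CARD('n)"
proof -
  define X where "X = (\<Sum>i\<in>UNIV. x$i)"
  define d where "d = real CARD('n)"
  have d: "d > 0" unfolding d_def by simp
  have "phi2 x = (\<Sum>i\<in>UNIV. (x$i - X/d)^2)"
    unfolding phi2_def X_def d_def power2_norm_eq_inner inner_vec_def jvec_def
    by (simp add: power2_eq_square)
  also have "\<dots> = (\<Sum>i\<in>UNIV. (x$i)^2) - 2*(X/d)*X + d*(X/d)^2"
  proof -
    have "\<And>i. (x$i - X/d)^2 = (x$i)^2 - (2*(X/d))*x$i + (X/d)^2" by (simp add: power2_diff)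
    then have "(\<Sum>i\<in>UNIV. (x$i - X/d)^2) = (\<Sum>i\<in>UNIV. (x$i)^2) - (\<Sum>i\<in>UNIV. (2*(X/d))*x$i) + (\<Sum>i\<in>(UNIV::'n set). (X/d)^2)"
      by (simp add: sum.distrib sum_subtractf)
    also have "\<dots> = (\<Sum>i\<in>UNIV. (x$i)^2) - 2*(X/d)*X + d*(X/d)^2"
      by (simp add: sum_distrib_left[symmetric] X_def d_def del: times_divide_eq_left times_divide_eq_right)
    finally show ?thesis .
  qed
  also have "\<dots> = (\<Sum>i\<in>UNIV. (x$i)^2) - X^2/d" using d by (simp add: field_simps power2_eq_square)
  finally show ?thesis unfolding X_def d_def .
qed

lemma Q_diff:
  fixes v c :: "real^'n"
  shows "a*phi1(v-c)+b*phi2(v-c) - (a*phi1(-v-c)+b*phi2(-v-c))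
     = -4*((a-b/real CARD('n))*(\<Sum>i\<in>UNIV. v$i)*(\<Sum>i\<in>UNIV. c$i) + b*(\<Sum>i\<in>UNIV. v$i*c$i))"
proof -
  have e1: "(\<Sum>i\<in>UNIV. (v-c)$i) = (\<Sum>i\<in>UNIV. v$i) - (\<Sum>i\<in>UNIV. c$i)" by (simp add: sum_subtractf)
  have e2: "(\<Sum>i\<in>UNIV. (-v-c)$i) = -(\<Sum>i\<in>UNIV. v$i) - (\<Sum>i\<in>UNIV. c$i)" by (simp add: sum_subtractf sum_negf)
  have e3: "(\<Sum>i\<in>UNIV. ((v-c)$i)^2) = (\<Sum>i\<in>UNIV. (v$i)^2) - 2*(\<Sum>i\<in>UNIV. v$i*c$i) + (\<Sum>i\<in>UNIV. (c$i)^2)"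
    by (simp add: power2_diff sum.distrib sum_subtractf sum_distrib_left algebra_simps)
  have e4: "(\<Sum>i\<in>UNIV. ((-v-c)$i)^2) = (\<Sum>i\<in>UNIV. (v$i)^2) + 2*(\<Sum>i\<in>UNIV. v$i*c$i) + (\<Sum>i\<in>UNIV. (c$i)^2)"
  proof -
    have "\<And>i. ((-v-c)$i)^2 = (v$i)^2 + 2*(v$i*c$i) + (c$i)^2" by (simp add: power2_eq_square algebra_simps)
    then show ?thesis by (simp add: sum.distrib sum_distrib_left)
  qed
  show ?thesis unfolding phi2_alt phi1_def e1 e2 e3 e4
    by (simp add: field_simps power2_eq_square)
qed

lemma vert_in:
  assumes "card (S::'n::finite set) = t" "t = s \<or> t = s+1"
  shows "chi_set S - ((real t - 1) / (real CARD('n) - 2 * real k)) *\<^sub>R jvec \<in> (Pvertices s k :: (real^'n) set)"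
    and "-(chi_set S - ((real t - 1) / (real CARD('n) - 2 * real k)) *\<^sub>R jvec) \<in> (Pvertices s k :: (real^'n) set)"
proof -
  have m: "chi_set S - ((real t - 1) / (real CARD('n) - 2 * real k)) *\<^sub>R jvec \<in> (Vset t k :: (real^'n) set)"
    unfolding Vset_def using assms(1) by blast
  show "chi_set S - ((real t - 1) / (real CARD('n) - 2 * real k)) *\<^sub>R jvec \<in> (Pvertices s k :: (real^'n) set)"
    using m assms(2) unfolding Pvertices_def by blast
  show "-(chi_set S - ((real t - 1) / (real CARD('n) - 2 * real k)) *\<^sub>R jvec) \<in> (Pvertices s k :: (real^'n) set)"
    using imageI[OF m, of uminus] assms(2) unfolding Pvertices_def by blast
qed

lemma vert_sums:
  fixes S :: "'n::finite set" and c :: "real^'n"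
  assumes "v = chi_set S - th *\<^sub>R jvec"
  shows "(\<Sum>i\<in>UNIV. v$i) = real (card S) - real CARD('n) * th"
    and "(\<Sum>i\<in>UNIV. v$i * c$i) = (\<Sum>i\<in>S. c$i) - th * (\<Sum>i\<in>UNIV. c$i)"
    and "(\<Sum>i\<in>UNIV. (v$i)^2) = real (card S) - 2*th*real (card S) + real CARD('n) * th^2"
proof -
  show "(\<Sum>i\<in>UNIV. v$i) = real (card S) - real CARD('n) * th"
    using assms by (simp add: sum_subtractf sum_chi_set jvec_def)
  have "\<And>i. v$i*c$i = chi_set S $ i * c$i - th*c$i" by (simp add: assms jvec_def algebra_simps)
  then have "(\<Sum>i\<in>UNIV. v$i * c$i) = (\<Sum>i\<in>UNIV. chi_set S $ i * c$i) - (\<Sum>i\<in>UNIV. th * c$i)"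
    by (simp add: sum_subtractf)
  then show "(\<Sum>i\<in>UNIV. v$i * c$i) = (\<Sum>i\<in>S. c$i) - th * (\<Sum>i\<in>UNIV. c$i)"
    by (simp add: sum_chi_mult sum_distrib_left)
  have "\<And>i. (v$i)^2 = (1 - 2*th) * chi_set S $ i + th^2"
  proof -
    fix i
    have vi: "v$i = (if i\<in>S then 1 else 0) - th" using assms by (simp add: chi_set_def jvec_def)
    show "(v$i)^2 = (1 - 2*th) * chi_set S $ i + th^2"
      unfolding vi by (simp add: chi_set_def power2_eq_square algebra_simps)
  qed
  then have "(\<Sum>i\<in>UNIV. (v$i)^2) = (1 - 2*th) * (\<Sum>i\<in>UNIV. chi_set S $ i) + real CARD('n) * th^2"
    by (simp add: sum.distrib sum_distrib_left)
  then show "(\<Sum>i\<in>UNIV. (v$i)^2) = real (card S) - 2*th*real (card S) + real CARD('n) * th^2"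
    by (simp add: sum_chi_set algebra_simps)
qed

lemma d4s:
  assumes k2: "k \<ge> 2" and sd: "real s \<le> real CARD('n) / (2 * real k)"
  shows "4 * s \<le> card (UNIV::'n set)"
proof -
  have "real s * (2*real k) \<le> real CARD('n)" using sd k2 by (simp add: field_simps)
  moreover have "real (4 * s) \<le> real s * (2*real k)" using mult_right_mono[of 2 "real k" "real s"] k2 by simp
  ultimately show ?thesis by linarith
qed

lemma exists_card:
  assumes "t \<le> CARD('n)" shows "\<exists>S::'n set. card S = t"
  using obtain_subset_with_card_n[of t "UNIV::'n set"] assms by metis

lemma lin_help: "(x::real) + b*(E - t*C) = 0 \<Longrightarrow> b*E = b*t*C - x"
  by (simp add: right_diff_distrib mult.assoc)

lemma c_zero:
  fixes c :: "real^'n" and s k :: nat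
  assumes k2: "k \<ge> 2" and dk: "CARD('n) > 2*k" and s1: "1 \<le> s"
    and sd: "real s \<le> real CARD('n) / (2 * real k)"
    and a: "a>0" and b: "b>0"
    and H: "\<forall>v\<in>(Pvertices s k :: (real^'n) set). a*phi1(v-c)+b*phi2(v-c) = 1"
  shows "c = 0"
proof -
  define d where "d = real CARD('n)"
  define th where "th t = (real t - 1)/(real CARD('n) - 2*real k)" for t :: nat
  define C where "C = (\<Sum>i\<in>UNIV. c$i)"
  have dpos: "d > 0" unfolding d_def by simp
  have d4: "4 * s \<le> CARD('n)" using d4s[OF k2 sd] .
  have key: "(a - b/d)*(real (card S) - d*th (card S))*C + b*((\<Sum>i\<in>S. c$i) - th (card S)*C) = 0"
    if cS: "card S = s \<or> card S = s+1" for S :: "'n set"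
  proof -
    define v where "v = chi_set S - th (card S) *\<^sub>R jvec"
    have v1: "v \<in> Pvertices s k" and v2: "-v \<in> Pvertices s k"
    proof -
      have "v = chi_set S - ((real (card S) - 1) / (real CARD('n) - 2 * real k)) *\<^sub>R jvec"
        unfolding v_def th_def ..
      then show "v \<in> Pvertices s k" "-v \<in> Pvertices s k" using vert_in[OF refl cS, of k] by simp_all
    qed
    have h1: "a*phi1(v-c)+b*phi2(v-c) = 1" using H v1 by blast
    have h2: "a*phi1(-v-c)+b*phi2(-v-c) = 1" using H v2 by blast
    have "a*phi1(v-c)+b*phi2(v-c) - (a*phi1(-v-c)+b*phi2(-v-c)) = 0" unfolding h1 h2 by simp
    then have "-4*((a-b/d)*(\<Sum>i\<in>UNIV. v$i)*(\<Sum>i\<in>UNIV. c$i) + b*(\<Sum>i\<in>UNIV. v$i*c$i)) = 0"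
      unfolding Q_diff d_def .
    then have "(a-b/d)*(\<Sum>i\<in>UNIV. v$i)*(\<Sum>i\<in>UNIV. c$i) + b*(\<Sum>i\<in>UNIV. v$i*c$i) = 0"
      using mult_eq_0_iff[of "-4::real"] by (simp only:) simp
    then show ?thesis unfolding vert_sums(1,2)[OF v_def] C_def[symmetric] d_def[symmetric] .
  qed
  have ceq: "c$i = c$j" for i j
  proof (cases "i = j")
    case False
    have cu: "card (UNIV - {i,j}) = CARD('n) - 2" using False by (simp add: card_Diff_subset)
    have "s - 1 \<le> card (UNIV - {i,j})" unfolding cu using d4 by linarith
    then obtain T where T: "T \<subseteq> UNIV - {i,j}" "card T = s - 1" using obtain_subset_with_card_n by metis
    have fT: "finite T" by simp
    have iT: "i \<notin> T" and jT: "j \<notin> T" using T by auto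
    have c1: "card (insert i T) = s" using T iT s1 fT by simp
    have c2: "card (insert j T) = s" using T jT s1 fT by simp
    have e1: "b*(\<Sum>x\<in>insert i T. c$x) = b*th s*C - (a-b/d)*(real s - d*th s)*C"
      using key[of "insert i T"] c1 by (intro lin_help) simp
    have e2: "b*(\<Sum>x\<in>insert j T. c$x) = b*th s*C - (a-b/d)*(real s - d*th s)*C"
      using key[of "insert j T"] c2 by (intro lin_help) simp
    have "(\<Sum>x\<in>insert i T. c$x) = (\<Sum>x\<in>insert j T. c$x)" using e1 e2 b by (metis mult_left_cancel less_irrefl)
    then show ?thesis using iT jT fT by simp
  qed simp

  define g where "g = c $ undefined"
  have ci: "c $ i = g" for i unfolding g_def using ceq[of i undefined] .
  have Cg: "C = d*g" unfolding C_def d_def ci by simp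
  have ES: "(\<Sum>i\<in>S. c$i) = real (card S)*g" for S :: "'n set" unfolding ci by simp
  have key2: "g*(real t - d*th t) = 0" if t: "t = s \<or> t = s+1" for t
  proof -
    have "t \<le> CARD('n)" using t d4 s1 by auto
    then obtain S :: "'n set" where cS: "card S = t" using exists_card by blast
    have e: "(a - b/d)*(real t - d*th t)*(d*g) + b*(real t*g - th t*(d*g)) = 0"
      using key[of S] cS t unfolding ES Cg by simp
    have ad: "(a - b/d)*d = a*d - b" using dpos by (simp add: field_simps)
    have "(a - b/d)*(real t - d*th t)*(d*g) + b*(real t*g - th t*(d*g))
        = ((a - b/d)*d)*(g*(real t - d*th t)) + b*(g*(real t - d*th t))"
      by (simp add: algebra_simps)
    also have "\<dots> = (a*d)*(g*(real t - d*th t))" unfolding ad by (simp add: algebra_simps)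
    finally show ?thesis using e a dpos by simp
  qed
  show "c = 0"
  proof (cases "g = 0")
    case True then show ?thesis by (simp add: vec_eq_iff ci)
  next
    case False
    have z1: "real s - d*th s = 0" using key2[of s] False by simp
    have z2: "real (s+1) - d*th (s+1) = 0" using key2[of "s+1"] False by simp
    have m: "d - 2*real k > 0" using dk unfolding d_def by linarith
    have "real s * (d - 2*real k) = d * (real s - 1)" using z1 m unfolding th_def d_def[symmetric] by (simp add: field_simps)
    moreover have "(real s + 1) * (d - 2*real k) = d * real s" using z2 m unfolding th_def d_def[symmetric] by (simp add: field_simps)
    ultimately have "d - 2*real k = d" by (simp add: algebra_simps)
    then show ?thesis using k2 by simp
  qed
qed

lemma vals:
  fixes s k :: nat
  assumes k2: "k \<ge> 2" and s1: "1 \<le> s" and sd: "real s \<le> real CARD('n) / (2 * real k)"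
    and H: "\<forall>v\<in>(Pvertices s k :: (real^'n) set). a*phi1(v-0)+b*phi2(v-0) = 1"
    and t: "t = s \<or> t = s+1"
  shows "a*(real t - real CARD('n)*((real t - 1)/(real CARD('n) - 2*real k)))^2
          + b*(real t - (real t)^2/real CARD('n)) = 1"
proof -
  define d where "d = real CARD('n)"
  define th where "th = (real t - 1)/(real CARD('n) - 2*real k)"
  have dpos: "d > 0" unfolding d_def by simp
  have "t \<le> CARD('n)" using t d4s[OF k2 sd] s1 by auto
  then obtain S :: "'n set" where cS: "card S = t" using exists_card by blast
  define v where "v = chi_set S - th *\<^sub>R jvec"
  have v1: "v \<in> Pvertices s k" using vert_in(1)[OF cS t, of k] unfolding v_def th_def by simp
  have p1: "phi1 v = (real t - d*th)^2" unfolding phi1_def vert_sums(1)[OF v_def] cS d_def ..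
  have p2: "phi2 v = real t - (real t)^2/d"
    unfolding phi2_alt vert_sums(1)[OF v_def] vert_sums(3)[OF v_def] cS d_def[symmetric]
    using dpos by (simp add: field_simps power2_eq_square)
  have "a*phi1 v + b*phi2 v = 1" using H v1 by simp
  then show ?thesis using p1 p2 unfolding d_def th_def by simp
qed

lemma alg2:
  fixes a b a' b' A1 A2 B1 B2 :: real
  assumes e1: "a*A1+b*B1=1" and e2: "a*A2+b*B2=1" and e3: "a'*A1+b'*B1=1" and e4: "a'*A2+b'*B2=1"
    and B: "B1 \<noteq> B2"
  shows "a = a' \<and> b = b'"
proof -
  have f1: "a*(A2*B1 - A1*B2) = B1 - B2"
  proof -
    have "a*(A2*B1 - A1*B2) = B1*(a*A2+b*B2) - B2*(a*A1+b*B1)" by (simp add: algebra_simps)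
    then show ?thesis using e1 e2 by simp
  qed
  have f2: "a'*(A2*B1 - A1*B2) = B1 - B2"
  proof -
    have "a'*(A2*B1 - A1*B2) = B1*(a'*A2+b'*B2) - B2*(a'*A1+b'*B1)" by (simp add: algebra_simps)
    then show ?thesis using e3 e4 by simp
  qed
  have nz: "A2*B1 - A1*B2 \<noteq> 0" using f1 B by auto
  have aa: "a = a'" using f1 f2 nz by (metis mult_right_cancel)
  have "b*(B1-B2) = b'*(B1-B2)"
  proof -
    have g1: "b*(B1-B2) = a*(A2-A1)" using e1 e2 by (simp add: algebra_simps)
    have g2: "b'*(B1-B2) = a'*(A2-A1)" using e3 e4 by (simp add: algebra_simps)
    show ?thesis using g1 g2 aa by simp
  qed
  then have "b = b'" using B by simp
  with aa show ?thesis by simp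
qed

theorem theorem7:
  fixes s k :: nat
  assumes "k \<ge> 2" and "CARD('n) > 2 * k" and "1 \<le> s" and "real s \<le> real CARD('n) / (2 * real k)"
  shows "\<forall>(a::real) b (c::real ^ 'n) a' b' c'.
           a > 0 \<and> b > 0 \<and> (\<forall>v\<in>(Pvertices s k :: (real ^ 'n) set). a * phi1 (v - c) + b * phi2 (v - c) = 1) \<and>
           a' > 0 \<and> b' > 0 \<and> (\<forall>v\<in>(Pvertices s k :: (real ^ 'n) set). a' * phi1 (v - c') + b' * phi2 (v - c') = 1)
           \<longrightarrow> (\<lambda>x::real ^ 'n. a * phi1 x + b * phi2 x) = (\<lambda>x::real ^ 'n. a' * phi1 x + b' * phi2 x) \<and> c = c'"
proof (intro allI impI, elim conjE)
  fix a b a' b' :: real and c c' :: "real^'n"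
  assume a: "a > 0" and b: "b > 0" and H: "\<forall>v\<in>(Pvertices s k :: (real ^ 'n) set). a * phi1 (v - c) + b * phi2 (v - c) = 1"
    and a': "a' > 0" and b': "b' > 0" and H': "\<forall>v\<in>(Pvertices s k :: (real ^ 'n) set). a' * phi1 (v - c') + b' * phi2 (v - c') = 1"
  have c0: "c = 0" using c_zero[OF assms a b H] .
  have c0': "c' = 0" using c_zero[OF assms a' b' H'] .
  define d where "d = real CARD('n)"
  define A where "A t = (real t - real CARD('n)*((real t - 1)/(real CARD('n) - 2*real k)))^2" for t :: nat
  define B where "B t = real t - (real t)^2/real CARD('n)" for t :: nat
  have E: "a*A t + b*B t = 1" "a'*A t + b'*B t = 1" if "t = s \<or> t = s+1" for t
    using vals[OF assms(1,3,4), of a b t] vals[OF assms(1,3,4), of a' b' t] H H' c0 c0' that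
    unfolding A_def B_def by auto
  have dpos: "d > 0" unfolding d_def by simp
  have "4 * s \<le> CARD('n)" using d4s[OF assms(1,4)] .
  then have dne: "d \<noteq> 2*real s + 1" unfolding d_def using assms(3) by linarith
  have "B s \<noteq> B (s+1)"
  proof
    assume "B s = B (s+1)"
    then have "real s - (real s)^2/d = real s + 1 - (real s + 1)^2/d" unfolding B_def d_def by simp
    then have "d = 2*real s + 1" using dpos by (simp add: field_simps power2_eq_square)
    with dne show False ..
  qed
  then have "a = a' \<and> b = b'" using alg2[OF E(1)[of s] E(1)[of "s+1"] E(2)[of s] E(2)[of "s+1"]] by simp
  then show "(\<lambda>x::real ^ 'n. a * phi1 x + b * phi2 x) = (\<lambda>x::real ^ 'n. a' * phi1 x + b' * phi2 x) \<and> c = c'"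
    using c0 c0' by simp
qed

end
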